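(* Let $f(u)=e^{g(u)}$ where $g\in C^3[0,\infty)$ satisfies $g'>0$, $g''>0$, $g'^2-g''\ge0$, $2g''^2-g'g'''>0$ on $[0,\infty)$. Let $v(r)=F^{-1}\big[\frac{r^2}{16}e^{-x(t)}\big]$, $t=-\log r$, for $0<r\le R$, with $x$, $t_0$, $R$ as in the context. Then $f'(v(r))\le\frac{16}{r^2}$ for $0<r\le R$.
   Context: Let $F(u)=\int_u^\infty\frac{ds}{f(s)}$, $\eta(y)=F^{-1}(e^{-y})$ and $h(y)=1-f'(\eta(y))F(\eta(y))$ for $y\ge-\log F(0)$. Under the hypotheses, $h(y)\to0$ as $y\to\infty$ and $h'<0$, and there exist $t_0\in\mathbb{R}$ and a $C^2$ function $x:[t_0,\infty)\to\mathbb{R}$ such that $4(e^{x(t)}-1)=h(x(t)+2t+\log16)$ for all $t\ge t_0$, $x(t_0)+2t_0+\log16=-\log F(0)$, $|x(t)|\le1$ for all large $t$, and $\xi(t):=x(t)+2t+\log16$ is strictly increasing; for each $t$ the value $x(t)$ is the unique solution of the implicit equation with $x+2t+\log 16\ge -\log F(0)$. Set $R=e^{-t_0}$; then $v=\eta(\xi(t))$ is defined on $(0,R]$ with $v(R)=0$. *)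

theory Defs
  imports "HOL-Analysis.Analysis"
begin

definition Fint :: "(real \<Rightarrow> real) \<Rightarrow> real \<Rightarrow> real" where
  "Fint g u = integral {u..} (\<lambda>s. 1 / exp (g s))"

definition Finv :: "(real \<Rightarrow> real) \<Rightarrow> real \<Rightarrow> real" where
  "Finv g = the_inv_into {0..} (Fint g)"

definition eta :: "(real \<Rightarrow> real) \<Rightarrow> real \<Rightarrow> real" where
  "eta g y = Finv g (exp (- y))"

text \<open>h(y) = 1 - f'(eta y) F(eta y), where f' = g' e^g (g1 is the derivative of g).\<close>
definition hfun :: "(real \<Rightarrow> real) \<Rightarrow> (real \<Rightarrow> real) \<Rightarrow> real \<Rightarrow> real" where
  "hfun g g1 y = 1 - g1 (eta g y) * exp (g (eta g y)) * Fint g (eta g y)"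

end

theory Submission
  imports Defs "HOL-Real_Asymp.Real_Asymp"
begin

locale gset =
  fixes g g1 g2 :: "real \<Rightarrow> real"
  assumes dg: "\<And>u. u \<ge> 0 \<Longrightarrow> (g has_real_derivative g1 u) (at u within {0..})"
    and dg1: "\<And>u. u \<ge> 0 \<Longrightarrow> (g1 has_real_derivative g2 u) (at u within {0..})"
    and g1pos: "\<And>u. u \<ge> 0 \<Longrightarrow> g1 u > 0"
    and g2pos: "\<And>u. u \<ge> 0 \<Longrightarrow> g2 u > 0"
begin

lemma dg_sub: "0 \<le> a \<Longrightarrow> a \<le> u \<Longrightarrow> u \<le> b \<Longrightarrow> (g has_real_derivative g1 u) (at u within {a..b})"
  by (rule DERIV_subset[OF dg]) auto

lemma dg1_sub: "0 \<le> a \<Longrightarrow> a \<le> u \<Longrightarrow> u \<le> b \<Longrightarrow> (g1 has_real_derivative g2 u) (at u within {a..b})"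
  by (rule DERIV_subset[OF dg1]) auto

lemma g1_mono: assumes "0 \<le> a" "a < b" shows "g1 a < g1 b"
proof -
  obtain z where z: "z \<in> {a<..<b}" "g1 b - g1 a = g2 z * (b - a)"
    using mvt_simple[of a b g1 "\<lambda>z. (*) (g2 z)"] assms dg1_sub
    by (auto simp: has_field_derivative_def)
  then have "g2 z > 0" using assms g2pos by auto
  with z assms have "g2 z * (b - a) > 0" by simp
  with z show ?thesis by simp
qed

lemma g1_mono_le: "0 \<le> a \<Longrightarrow> a \<le> b \<Longrightarrow> g1 a \<le> g1 b"
  using g1_mono by (cases "a = b") (auto intro: less_imp_le)

lemma g_lower: assumes "0 \<le> a" "a < b" shows "g b - g a \<ge> g1 a * (b - a)"
proof -
  obtain z where z: "z \<in> {a<..<b}" "g b - g a = g1 z * (b - a)"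
    using mvt_simple[of a b g "\<lambda>z. (*) (g1 z)"] assms dg_sub
    by (auto simp: has_field_derivative_def)
  then have "g1 z \<ge> g1 a" using assms g1_mono_le by auto
  with z assms show ?thesis by (simp add: mult_right_mono)
qed

lemma g_mono_le: "0 \<le> a \<Longrightarrow> a \<le> b \<Longrightarrow> g a \<le> g b"
  using g_lower[of a b] g1pos[of a]
  by (cases "a = b") (auto, smt (verit) mult_pos_pos)

lemma g_at_top: "filterlim g at_top at_top"
proof (rule filterlim_at_top_mono[of "\<lambda>s. g 0 + g1 0 * s"])
  show "filterlim (\<lambda>s. g 0 + g1 0 * s) at_top at_top"
    using g1pos[of 0] by real_asymp
  show "\<forall>\<^sub>F s in at_top. g 0 + g1 0 * s \<le> g s"
    using eventually_gt_at_top[of 0]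
    by eventually_elim (use g_lower[of 0] in force)
qed

lemma cont_g: "continuous_on {0..} g"
  using dg by (meson DERIV_continuous atLeast_iff continuous_on_eq_continuous_within)

lemma cont_g1: "continuous_on {0..} g1"
  using dg1 by (meson DERIV_continuous atLeast_iff continuous_on_eq_continuous_within)

lemma ftc_h: assumes "0 \<le> u" "u \<le> y"
  shows "((\<lambda>s. g1 s / exp (g s)) has_integral (1 / exp (g u) - 1 / exp (g y))) {u..y}"
proof -
  have "((\<lambda>s. g1 s / exp (g s)) has_integral ((- 1 / exp (g y)) - (- 1 / exp (g u)))) {u..y}"
  proof (rule fundamental_theorem_of_calculus[OF assms(2)])
    fix s assume s: "s \<in> {u..y}"
    have "((\<lambda>s. - 1 / exp (g s)) has_real_derivative g1 s / exp (g s)) (at s within {u..y})"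
      using dg_sub[of u s y] s assms
      by (auto intro!: derivative_eq_intros simp: field_simps power2_eq_square)
    then show "((\<lambda>s. - 1 / exp (g s)) has_vector_derivative g1 s / exp (g s)) (at s within {u..y})"
      by (simp add: has_real_derivative_iff_has_vector_derivative)
  qed
  then show ?thesis by simp
qed

lemma h_int: assumes "0 \<le> u"
  shows "((\<lambda>s. g1 s / exp (g s)) has_integral (1 / exp (g u))) {u..}"
proof (rule has_integral_to_inf)
  fix y
  show "(\<lambda>s. g1 s / exp (g s)) integrable_on {u..y}"
  proof (cases "u \<le> y")
    case True then show ?thesis using ftc_h[OF assms True] by blast
  next
    case False then show ?thesis by (simp add: integrable_on_empty)
  qed
next
  fix y assume "u \<le> y"
  then show "0 \<le> g1 y / exp (g y)" using g1pos[of y] assms by simp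
next
  have "\<forall>\<^sub>F y in at_top. integral {u..y} (\<lambda>s. g1 s / exp (g s)) = 1 / exp (g u) - 1 / exp (g y)"
    using eventually_ge_at_top[of u] by eventually_elim (use ftc_h assms in blast)
  moreover have "((\<lambda>y. 1 / exp (g u) - 1 / exp (g y)) \<longlongrightarrow> 1 / exp (g u) - 0) at_top"
  proof (intro tendsto_intros)
    have "filterlim (\<lambda>y. exp (g y)) at_top at_top"
      using g_at_top exp_at_top filterlim_compose by blast
    then show "((\<lambda>y. 1 / exp (g y)) \<longlongrightarrow> 0) at_top"
      by (rule tendsto_divide_0[OF tendsto_const filterlim_at_top_imp_at_infinity])
  qed
  ultimately show "((\<lambda>y. integral {u..y} (\<lambda>s. g1 s / exp (g s))) \<longlongrightarrow> 1 / exp (g u)) at_top"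
    by (simp add: filterlim_cong tendsto_cong)
qed

lemma fi_int: assumes "0 \<le> u"
  shows "(\<lambda>s. 1 / exp (g s)) integrable_on {u..}"
proof (rule measurable_bounded_by_integrable_imp_integrable_real)
  have "continuous_on {u..} g" using cont_g by (rule continuous_on_subset) (use assms in auto)
  then have "continuous_on {u..} (\<lambda>s. 1 / exp (g s))"
    by (intro continuous_intros) auto
  then show "(\<lambda>s. 1 / exp (g s)) \<in> borel_measurable (lebesgue_on {u..})"
    by (intro continuous_imp_measurable_on_sets_lebesgue) auto
  show "(\<lambda>s. g1 s / exp (g s) / g1 u) integrable_on {u..}"
    using h_int[OF assms] by (intro integrable_on_divide) blast
  fix s assume "s \<in> {u..}"
  then have "g1 u \<le> g1 s" "g1 u > 0" using g1_mono_le g1pos assms by auto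
  then show "\<bar>1 / exp (g s)\<bar> \<le> g1 s / exp (g s) / g1 u"
    by (simp add: field_simps)
qed auto

lemma Fint_le: assumes "0 \<le> u"
  shows "Fint g u \<le> 1 / exp (g u) / g1 u"
proof -
  have "Fint g u \<le> integral {u..} (\<lambda>s. g1 s / exp (g s) / g1 u)"
    unfolding Fint_def
  proof (rule integral_le)
    show "(\<lambda>s. 1 / exp (g s)) integrable_on {u..}" by (rule fi_int[OF assms])
    show "(\<lambda>s. g1 s / exp (g s) / g1 u) integrable_on {u..}"
      using h_int[OF assms] by (intro integrable_on_divide) blast
    fix s assume "s \<in> {u..}"
    then have "g1 u \<le> g1 s" "g1 u > 0" using g1_mono_le g1pos assms by auto
    then show "1 / exp (g s) \<le> g1 s / exp (g s) / g1 u"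
      by (simp add: field_simps)
  qed
  also have "\<dots> = 1 / exp (g u) / g1 u"
    using integral_unique[OF h_int[OF assms]] integral_divide[of "{u..}" "\<lambda>s. g1 s / exp (g s)" "g1 u"]
    by (simp del: integral_divide)
  finally show ?thesis .
qed

lemma Fint_nonneg: "0 \<le> u \<Longrightarrow> 0 \<le> Fint g u"
  unfolding Fint_def by (rule integral_nonneg) (auto intro: fi_int)

lemma Fint_split: assumes "0 \<le> u" "u \<le> w"
  shows "Fint g u = integral {u..w} (\<lambda>s. 1 / exp (g s)) + Fint g w"
proof -
  have "continuous_on {u..w} g" using cont_g by (rule continuous_on_subset) (use assms in auto)
  then have "continuous_on {u..w} (\<lambda>s. 1 / exp (g s))"
    by (intro continuous_intros) auto
  then have i1: "(\<lambda>s. 1 / exp (g s)) integrable_on {u..w}"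
    by (rule integrable_continuous_interval)
  have i2: "(\<lambda>s. 1 / exp (g s)) integrable_on {w..}" using fi_int assms by auto
  have "((\<lambda>s. 1 / exp (g s)) has_integral (integral {u..w} (\<lambda>s. 1 / exp (g s)) + Fint g w)) ({u..w} \<union> {w..})"
    unfolding Fint_def
  proof (rule has_integral_Un)
    show "negligible ({u..w} \<inter> {w..})"
      using assms by (subgoal_tac "{u..w} \<inter> {w..} = {w}") auto
  qed (use i1 i2 in auto)
  moreover have "{u..w} \<union> {w..} = {u..}" using assms by auto
  ultimately show ?thesis unfolding Fint_def by (simp add: integral_unique)
qed

lemma fi_int_iv: assumes "0 \<le> u" shows "(\<lambda>s. 1 / exp (g s)) integrable_on {u..w}"
  by (rule integrable_on_subinterval[OF fi_int[OF assms]]) auto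

lemma int_bounds: assumes "0 \<le> u" "u \<le> w"
  shows "(w - u) / exp (g w) \<le> integral {u..w} (\<lambda>s. 1 / exp (g s))"
    and "integral {u..w} (\<lambda>s. 1 / exp (g s)) \<le> (w - u) / exp (g 0)"
proof -
  have c1: "((\<lambda>s. 1 / exp (g w)) has_integral (w - u) / exp (g w)) {u..w}"
    using has_integral_const_real[of "1 / exp (g w)" u w] assms by simp
  have c2: "((\<lambda>s. 1 / exp (g 0)) has_integral (w - u) / exp (g 0)) {u..w}"
    using has_integral_const_real[of "1 / exp (g 0)" u w] assms by simp
  have fi: "((\<lambda>s. 1 / exp (g s)) has_integral integral {u..w} (\<lambda>s. 1 / exp (g s))) {u..w}"
    using fi_int_iv[OF assms(1)] by blast
  show "(w - u) / exp (g w) \<le> integral {u..w} (\<lambda>s. 1 / exp (g s))"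
    by (rule has_integral_le[OF c1 fi]) (use g_mono_le assms in \<open>auto simp: frac_le\<close>)
  show "integral {u..w} (\<lambda>s. 1 / exp (g s)) \<le> (w - u) / exp (g 0)"
    by (rule has_integral_le[OF fi c2]) (use g_mono_le assms in \<open>auto simp: frac_le\<close>)
qed

lemma Fint_strict: assumes "0 \<le> u" "u < w" shows "Fint g w < Fint g u"
  using Fint_split[of u w] int_bounds(1)[of u w] assms
  by (smt (verit) divide_pos_pos exp_gt_zero)

lemma Fint_inj: "inj_on (Fint g) {0..}"
  by (rule inj_onI) (metis atLeast_iff Fint_strict linorder_neqE_linordered_idom order_less_irrefl)

lemma Fint_lip: assumes "0 \<le> u" "0 \<le> w" shows "\<bar>Fint g u - Fint g w\<bar> \<le> \<bar>u - w\<bar> / exp (g 0)"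
proof (cases "u \<le> w")
  case True then show ?thesis
    using Fint_split[of u w] int_bounds[of u w] assms
    by (smt (verit) divide_nonneg_pos exp_gt_zero)
next
  case False then show ?thesis
    using Fint_split[of w u] int_bounds[of w u] assms
    by (smt (verit) divide_nonneg_pos exp_gt_zero)
qed

lemma Fint_cont: "continuous_on {0..} (Fint g)"
proof (rule continuous_onI)
  fix x e :: real assume x: "x \<in> {0..}" and e: "0 < e"
  show "\<exists>d>0. \<forall>x'\<in>{0..}. dist x' x < d \<longrightarrow> dist (Fint g x') (Fint g x) \<le> e"
  proof (intro exI[of _ "e * exp (g 0)"] conjI ballI impI)
    show "0 < e * exp (g 0)" using e by simp
    fix x' assume x': "x' \<in> {0..}" "dist x' x < e * exp (g 0)"
    then have "\<bar>x' - x\<bar> / exp (g 0) < e" by (simp add: dist_real_def field_simps)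
    then show "dist (Fint g x') (Fint g x) \<le> e"
      using Fint_lip[of x' x] x x' by (simp add: dist_real_def)
  qed
qed

lemma Fint_small: assumes "y > 0" shows "\<exists>U\<ge>0. Fint g U < y"
proof -
  have "filterlim (\<lambda>u. exp (g u)) at_top at_top"
    using filterlim_compose[OF exp_at_top g_at_top] by simp
  then have "filterlim (\<lambda>u. exp (g u) * g1 0) at_top at_top"
    using filterlim_at_top_mult_tendsto_pos[OF tendsto_const g1pos[of 0]] by blast
  then have "\<forall>\<^sub>F u in at_top. exp (g u) * g1 0 > 1 / y"
    by (simp add: filterlim_at_top_dense)
  moreover have "\<forall>\<^sub>F u in at_top. u \<ge> (0::real)" by (rule eventually_ge_at_top)
  ultimately obtain U where U: "exp (g U) * g1 0 > 1 / y" "U \<ge> 0"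
    by (metis (mono_tags, lifting) eventually_at_top_linorder order_refl eventually_conj)
  have "Fint g U \<le> 1 / exp (g U) / g1 U" by (rule Fint_le[OF U(2)])
  also have "\<dots> \<le> 1 / exp (g U) / g1 0"
    using g1_mono_le[of 0 U] g1pos[of 0] U by (simp add: frac_le field_simps)
  also have "\<dots> < y" using U assms g1pos[of 0] by (simp add: field_simps)
  finally show ?thesis using U by blast
qed

lemma Finv_prop: assumes "0 < y" "y \<le> Fint g 0"
  shows "Finv g y \<ge> 0" "Fint g (Finv g y) = y"
proof -
  obtain U where U: "U \<ge> 0" "Fint g U < y" using Fint_small assms by blast
  have "continuous_on {0..U} (Fint g)" using Fint_cont by (rule continuous_on_subset) auto
  then obtain z where z: "0 \<le> z" "z \<le> U" "Fint g z = y"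
    using IVT2'[of "Fint g" U y 0] U assms by auto
  then have "y \<in> Fint g ` {0..}" by auto
  then show "Finv g y \<ge> 0" "Fint g (Finv g y) = y"
    unfolding Finv_def using Fint_inj the_inv_into_into[of "Fint g" "{0..}" y "{0..}"] f_the_inv_into_f[OF Fint_inj]
    by auto
qed

end

theorem lemma3p6:
  fixes g g1 g2 g3 :: "real \<Rightarrow> real" and x :: "real \<Rightarrow> real" and x1 x2 :: "real \<Rightarrow> real"
    and t0 :: real
  assumes dg: "\<And>u. u \<ge> 0 \<Longrightarrow> (g has_real_derivative g1 u) (at u within {0..})"
    and dg1: "\<And>u. u \<ge> 0 \<Longrightarrow> (g1 has_real_derivative g2 u) (at u within {0..})"
    and dg2: "\<And>u. u \<ge> 0 \<Longrightarrow> (g2 has_real_derivative g3 u) (at u within {0..})"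
    and cg3: "continuous_on {0..} g3"
    and g1pos: "\<And>u. u \<ge> 0 \<Longrightarrow> g1 u > 0"
    and g2pos: "\<And>u. u \<ge> 0 \<Longrightarrow> g2 u > 0"
    and c1: "\<And>u. u \<ge> 0 \<Longrightarrow> (g1 u)\<^sup>2 - g2 u \<ge> 0"
    and c2: "\<And>u. u \<ge> 0 \<Longrightarrow> 2 * (g2 u)\<^sup>2 - g1 u * g3 u > 0"
    and dx: "\<And>t. t \<ge> t0 \<Longrightarrow> (x has_real_derivative x1 t) (at t within {t0..})"
    and dx1: "\<And>t. t \<ge> t0 \<Longrightarrow> (x1 has_real_derivative x2 t) (at t within {t0..})"
    and cx2: "continuous_on {t0..} x2"
    and xeq: "\<And>t. t \<ge> t0 \<Longrightarrow> 4 * (exp (x t) - 1) = hfun g g1 (x t + 2 * t + ln 16)"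
    and xinit: "x t0 + 2 * t0 + ln 16 = - ln (Fint g 0)"
    and xbdd: "eventually (\<lambda>t. \<bar>x t\<bar> \<le> 1) at_top"
    and ximono: "strict_mono_on {t0..} (\<lambda>t. x t + 2 * t + ln 16)"
    and xuniq: "\<And>t y. t \<ge> t0 \<Longrightarrow> y + 2 * t + ln 16 \<ge> - ln (Fint g 0) \<Longrightarrow>
                  4 * (exp y - 1) = hfun g g1 (y + 2 * t + ln 16) \<Longrightarrow> y = x t"
  shows "\<forall>r. 0 < r \<and> r \<le> exp (- t0) \<longrightarrow>
           (let v = Finv g (r\<^sup>2 / 16 * exp (- x (- ln r)))
            in g1 v * exp (g v) \<le> 16 / r\<^sup>2)"
proof (intro allI impI)
  fix r :: real assume r: "0 < r \<and> r \<le> exp (- t0)"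
  interpret gset g g1 g2 using dg dg1 g1pos g2pos by unfold_locales auto
  define t where "t = - ln r"
  have "ln r \<le> - t0" using r by (metis ln_exp ln_le_cancel_iff exp_gt_zero)
  then have tt0: "t0 \<le> t" unfolding t_def by simp
  define xi where "xi = x t + 2 * t + ln 16"
  have xige: "- ln (Fint g 0) \<le> xi"
  proof (cases "t = t0")
    case True then show ?thesis using xinit xi_def by simp
  next
    case False then have "t0 < t" using tt0 by simp
    then show ?thesis using strict_mono_onD[OF ximono, of t0 t] xinit xi_def by simp
  qed
  have F0pos: "Fint g 0 > 0" using Fint_strict[of 0 1] Fint_nonneg[of 1] by simp
  define y where "y = exp (- xi)"
  have ypos: "0 < y" unfolding y_def by simp
  have "exp (- xi) \<le> exp (ln (Fint g 0))" using xige by simp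
  then have yle: "y \<le> Fint g 0" unfolding y_def using F0pos by simp
  have et: "exp t = 1 / r" unfolding t_def using r by (simp add: exp_minus inverse_eq_divide)
  have e2t: "exp (2 * t) = exp t * exp t" by (metis exp_add mult_2)
  have r2: "exp (2 * t) = 1 / r\<^sup>2" unfolding e2t et by (simp add: power2_eq_square)
  have arg: "r\<^sup>2 / 16 * exp (- x (- ln r)) = y"
  proof -
    have "y = exp (- x t) / (exp (2 * t) * 16)" unfolding y_def xi_def
      by (simp add: exp_diff exp_add exp_minus field_simps)
    then show ?thesis unfolding t_def[symmetric] using r r2 by (simp only:) (simp add: field_simps)
  qed
  define v where "v = Finv g y"
  have v0: "0 \<le> v" and Fv: "Fint g v = y" using Finv_prop[OF ypos yle] v_def by auto
  define E where "E = exp (x t)"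
  have heq: "4 * (E - 1) = 1 - g1 v * exp (g v) * y"
    using xeq[OF tt0] unfolding hfun_def eta_def E_def
    by (simp add: xi_def[symmetric] y_def[symmetric] v_def[symmetric] Fv)
  have "g1 v * exp (g v) * y \<le> 1"
    using Fint_le[OF v0] Fv g1pos[OF v0] by (simp add: field_simps)
  then have E1: "E \<ge> 1" using heq by simp
  have invy: "1 / y = E * 16 * exp (2 * t)"
  proof -
    have "E * 16 * exp (2 * t) = exp (x t + 2 * t + ln 16)"
      unfolding E_def by (simp add: exp_add)
    also have "\<dots> = 1 / exp (- (x t + 2 * t + ln 16))" by (simp only: exp_minus inverse_eq_divide) simp
    finally show ?thesis unfolding y_def xi_def by simp
  qed
  have P: "g1 v * exp (g v) = (5 - 4 * E) * (1 / y)"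
    using heq ypos by (simp add: field_simps)
  have key: "(5 - 4 * E) * E \<le> 1"
  proof -
    have "(4 * E - 1) * (E - 1) \<ge> 0" using E1 by simp
    then show ?thesis by (simp add: algebra_simps)
  qed
  have "g1 v * exp (g v) = ((5 - 4 * E) * E) * (16 / r\<^sup>2)"
    unfolding P invy r2 by simp
  also have "\<dots> \<le> 1 * (16 / r\<^sup>2)" using key r by (intro mult_right_mono) auto
  finally have "g1 v * exp (g v) \<le> 16 / r\<^sup>2" by simp
  then show "let v = Finv g (r\<^sup>2 / 16 * exp (- x (- ln r))) in g1 v * exp (g v) \<le> 16 / r\<^sup>2"
    unfolding arg v_def[symmetric] Let_def .
qed

end
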